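(* Let $n\geq1$, $k\in\{1,\ldots,n\}$, $l\in\{1,\ldots,n\}$, and let $v=v_{l,\eta_k}+q(1,1)\in\mathbb N^2$ with $q\in\mathbb N$, $q\geq n-l+1+r_{l,\eta_k}$. Then $f_k(v)\geq f_k(u)$ for all $u\in T_{0,\eta_k}\cup\bigcup_{j=1}^l(T_{j,\eta_k}+r_{j,\eta_k}(1,1))$.
   Context: $f_k(v)=kv_1+(1-k)v_2$. $\Omega$ is the set of $\eta=(z,d_0,\ldots,d_r)$ with $z\in\{0,1\}$, $d_0=0$, $d_i\geq1$ ($1\leq i\leq r$), $\sum d_i=n$. For $j\in\{1,\ldots,n\}$, $t$ unique with $\sum_{i<t}d_i<j\leq\sum_{i\leq t}d_i$, $c=j-\sum_{i<t}d_i$; $v_{j,\eta}=(\sum_{i\text{ odd},i<t}d_i+c,0)$ if $z=1,t$ odd; $(0,\sum_{i\text{ even},i<t}d_i+c)$ if $z=1,t$ even; $(0,\sum_{i\text{ odd},i<t}d_i+c)$ if $z=0,t$ odd; $(\sum_{i\text{ even},i<t}d_i+c,0)$ if $z=0,t$ even. $T_{j,\eta}=\{v_{j,\eta}+p(1,1):0\leq p\leq n-j\}$, $T_{0,\eta}=\{(p,p):1\leq p\leq n\}$, $r_{j,\eta}=n\pi_2(v_{j,\eta})$, $T_{j,\eta}+r_{j,\eta}(1,1)=\{w+(r_{j,\eta},r_{j,\eta}):w\in T_{j,\eta}\}$. $\eta_k$: $z_k=1$ if $k\leq n+1-k$, else $0$; $d_{k,0}=0$; for $l\geq1$, $O_l=\sum_{j\text{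 odd},j\leq l-1}d_{k,j}$, $E_l=\sum_{j\text{ even},j\leq l-1}d_{k,j}$; $t_l=\max\{m\in\mathbb N:mk\leq(E_l+1)(n+1-k)\}$ ($z_k=1$, $l$ odd), $\max\{m:m(n+1-k)\leq(O_l+1)k\}$ ($z_k=1$, $l$ even), $\max\{m:m(n+1-k)\leq(E_l+1)k\}$ ($z_k=0$, $l$ odd), $\max\{m:mk\leq(O_l+1)(n+1-k)\}$ ($z_k=0$, $l$ even); $s_1=0$, $s_l=O_l$ (odd $l>1$), $s_l=E_l$ (even $l$); $d_{k,l}=\min\{n-\sum_{j<l}d_{k,j},t_l-s_l\}$, stopping at first $r$ with $\sum_{j\leq r}d_{k,j}=n$; $\eta_k=(z_k,d_{k,0},\ldots,d_{k,r})\in\Omega$. *)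

theory Defs
  imports Main
begin

text \<open>An element eta = (z, d_0, ..., d_r) of Omega is represented as a pair
  (z, [d_0, ..., d_r]) with z :: bool (True = 1, False = 0).\<close>

type_synonym eta = "bool \<times> nat list"

definition rr :: "eta \<Rightarrow> nat" where
  "rr \<eta> = length (snd \<eta>) - 1"

definition dd :: "eta \<Rightarrow> nat \<Rightarrow> nat" where
  "dd \<eta> i = snd \<eta> ! i"

definition Omega :: "nat \<Rightarrow> eta set" where
  "Omega n = {\<eta>. snd \<eta> \<noteq> [] \<and> dd \<eta> 0 = 0 \<and> (\<forall>i\<in>{1..rr \<eta>}. dd \<eta> i \<ge> 1)
                 \<and> (\<Sum>i\<le>rr \<eta>. dd \<eta> i) = n}"

definition tidx :: "eta \<Rightarrow> nat \<Rightarrow> nat" where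
  "tidx \<eta> j = (THE t. t \<le> rr \<eta> \<and> (\<Sum>i<t. dd \<eta> i) < j \<and> j \<le> (\<Sum>i\<le>t. dd \<eta> i))"

definition vv :: "eta \<Rightarrow> nat \<Rightarrow> nat \<times> nat" where
  "vv \<eta> j = (let t = tidx \<eta> j;
                  c = j - (\<Sum>i<t. dd \<eta> i);
                  Od = (\<Sum>i\<in>{i. i < t \<and> odd i}. dd \<eta> i);
                  Ev = (\<Sum>i\<in>{i. i < t \<and> even i}. dd \<eta> i)
              in if fst \<eta> then (if odd t then (Od + c, 0) else (0, Ev + c))
                 else (if odd t then (0, Od + c) else (Ev + c, 0)))"

definition TT :: "nat \<Rightarrow> eta \<Rightarrow> nat \<Rightarrow> (nat \<times> nat) set" where
  "TT n \<eta> j = {(fst (vv \<eta> j) + p, snd (vv \<eta> j) + p) | p. p \<le> n - j}"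

definition T0 :: "nat \<Rightarrow> (nat \<times> nat) set" where
  "T0 n = {(p, p) | p. 1 \<le> p \<and> p \<le> n}"

definition rv :: "nat \<Rightarrow> eta \<Rightarrow> nat \<Rightarrow> nat" where
  "rv n \<eta> j = n * snd (vv \<eta> j)"

definition shift :: "(nat \<times> nat) set \<Rightarrow> nat \<Rightarrow> (nat \<times> nat) set" where
  "shift A r = {(a + r, b + r) | a b. (a, b) \<in> A}"

definition fk :: "nat \<Rightarrow> nat \<times> nat \<Rightarrow> int" where
  "fk k v = int k * int (fst v) + (1 - int k) * int (snd v)"

definition zk :: "nat \<Rightarrow> nat \<Rightarrow> bool" where
  "zk n k = (k \<le> n + 1 - k)"

text \<open>ds = [d_{k,0}, ..., d_{k,l-1}]; computes d_{k,l}\<close>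
definition dstep :: "nat \<Rightarrow> nat \<Rightarrow> nat list \<Rightarrow> nat \<Rightarrow> nat" where
  "dstep n k ds l =
    (let Os = (\<Sum>j\<in>{j. j \<le> l - 1 \<and> odd j}. ds ! j);
         Es = (\<Sum>j\<in>{j. j \<le> l - 1 \<and> even j}. ds ! j);
         t = (if zk n k then
                (if odd l then (GREATEST m. m * k \<le> (Es + 1) * (n + 1 - k))
                 else (GREATEST m. m * (n + 1 - k) \<le> (Os + 1) * k))
              else
                (if odd l then (GREATEST m. m * (n + 1 - k) \<le> (Es + 1) * k)
                 else (GREATEST m. m * k \<le> (Os + 1) * (n + 1 - k))));
         s = (if l = 1 then 0 else if odd l then Os else Es)
     in min (n - sum_list ds) (t - s))"

fun dseq :: "nat \<Rightarrow> nat \<Rightarrow> nat \<Rightarrow> nat list" where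
  "dseq n k 0 = [0]"
| "dseq n k (Suc l) = (let ds = dseq n k l in ds @ [dstep n k ds (Suc l)])"

definition dk :: "nat \<Rightarrow> nat \<Rightarrow> nat \<Rightarrow> nat" where
  "dk n k l = dseq n k l ! l"

definition rk :: "nat \<Rightarrow> nat \<Rightarrow> nat" where
  "rk n k = (LEAST r. (\<Sum>j\<le>r. dk n k j) = n)"

definition etak :: "nat \<Rightarrow> nat \<Rightarrow> eta" where
  "etak n k = (zk n k, dseq n k (rk n k))"

end

theory Submission
  imports Defs
begin

lemma greatest_div:
  assumes "0 < (a::nat)"
  shows "(GREATEST m. m * a \<le> Y) = Y div a"
proof (rule Greatest_equality)
  show "Y div a * a \<le> Y" by (rule div_times_less_eq_dividend)
next
  fix y assume "y * a \<le> Y"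
  then show "y \<le> Y div a" using assms
    by (metis div_le_mono nonzero_mult_div_cancel_right not_gr0)
qed

lemma div_succ_gt:
  assumes "0 < (a::nat)"
  shows "Y < (Y div a + 1) * a"
proof -
  have "Y = Y div a * a + Y mod a" by simp
  moreover have "Y mod a < a" using assms by simp
  moreover have "(Y div a + 1) * a = Y div a * a + a" by simp
  ultimately show ?thesis by linarith
qed

lemma dseq_len: "length (dseq n k l) = Suc l"
  by (induction l) (simp_all add: Let_def)

lemma dseq_nth_aux: "j \<le> l \<Longrightarrow> dseq n k l ! j = dseq n k j ! j"
proof (induction l)
  case 0 then show ?case by simp
next
  case (Suc l)
  show ?case
  proof (cases "j \<le> l")
    case True
    then have "dseq n k (Suc l) ! j = dseq n k l ! j"
      by (simp add: Let_def nth_append dseq_len)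
    then show ?thesis using Suc True by simp
  next
    case False
    then have "j = Suc l" using Suc by simp
    then show ?thesis by simp
  qed
qed

lemma dseq_nth: "j \<le> l \<Longrightarrow> dseq n k l ! j = dk n k j"
  unfolding dk_def by (rule dseq_nth_aux)

lemma dk0: "dk n k 0 = 0"
  by (simp add: dk_def)

lemma dk_Suc: "dk n k (Suc l) = dstep n k (dseq n k l) (Suc l)"
  by (simp add: dk_def Let_def nth_append dseq_len)

definition Sd :: "nat \<Rightarrow> nat \<Rightarrow> nat \<Rightarrow> nat" where
  "Sd n k m = (\<Sum>i<m. dk n k i)"
definition Od :: "nat \<Rightarrow> nat \<Rightarrow> nat \<Rightarrow> nat" where
  "Od n k m = (\<Sum>i\<in>{i. i<m \<and> odd i}. dk n k i)"
definition Ed :: "nat \<Rightarrow> nat \<Rightarrow> nat \<Rightarrow> nat" where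
  "Ed n k m = (\<Sum>i\<in>{i. i<m \<and> even i}. dk n k i)"
definition aa :: "nat \<Rightarrow> nat \<Rightarrow> nat" where
  "aa n k = (if zk n k then k else n + 1 - k)"
definition bb :: "nat \<Rightarrow> nat \<Rightarrow> nat" where
  "bb n k = (if zk n k then n + 1 - k else k)"

lemma sum_list_dseq: "sum_list (dseq n k l) = Sd n k (Suc l)"
  unfolding Sd_def sum_list_sum_nth dseq_len
  by (rule sum.cong) (auto simp: dseq_nth)

lemma set_Suc_odd: "{i. i < Suc m \<and> odd i} = (if odd m then insert m {i. i < m \<and> odd i} else {i. i < m \<and> odd i})"
  by (auto simp: less_Suc_eq)
lemma set_Suc_even: "{i. i < Suc m \<and> even i} = (if even m then insert m {i. i < m \<and> even i} else {i. i < m \<and> even i})"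
  by (auto simp: less_Suc_eq)

lemma Sd_Suc: "Sd n k (Suc m) = Sd n k m + dk n k m"
  by (simp add: Sd_def)
lemma Od_Suc: "Od n k (Suc m) = Od n k m + (if odd m then dk n k m else 0)"
  unfolding Od_def set_Suc_odd by simp
lemma Ed_Suc: "Ed n k (Suc m) = Ed n k m + (if even m then dk n k m else 0)"
  unfolding Ed_def set_Suc_even by simp
lemma Sd_split: "Sd n k m = Od n k m + Ed n k m"
proof (induction m)
  case 0 then show ?case by (simp add: Sd_def Od_def Ed_def)
next
  case (Suc m) then show ?case by (simp add: Sd_Suc Od_Suc Ed_Suc)
qed

lemma Od_dstep: "(\<Sum>j\<in>{j. j \<le> Suc l - 1 \<and> odd j}. dseq n k l ! j) = Od n k (Suc l)"
  unfolding Od_def by (rule sum.cong) (auto simp: dseq_nth less_Suc_eq_le)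
lemma Ed_dstep: "(\<Sum>j\<in>{j. j \<le> Suc l - 1 \<and> even j}. dseq n k l ! j) = Ed n k (Suc l)"
  unfolding Ed_def by (rule sum.cong) (auto simp: dseq_nth less_Suc_eq_le)

lemma aa_pos: "1 \<le> k \<Longrightarrow> k \<le> n \<Longrightarrow> 0 < aa n k" by (simp add: aa_def)
lemma bb_pos: "1 \<le> k \<Longrightarrow> k \<le> n \<Longrightarrow> 0 < bb n k" by (simp add: bb_def)

lemma dk_odd:
  assumes "1 \<le> k" "k \<le> n" "odd m"
  shows "dk n k m = min (n - Sd n k m) ((Ed n k m + 1) * bb n k div aa n k - Od n k m)"
proof -
  obtain l where m: "m = Suc l" using assms(3) by (cases m) auto
  have o1: "(if m = 1 then 0 else Od n k m) = Od n k m"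
    by (simp add: Od_def)
  show ?thesis
    using assms o1 unfolding m dk_Suc dstep_def Let_def Od_dstep Ed_dstep sum_list_dseq
    by (auto simp: aa_def bb_def greatest_div mult.commute)
qed

lemma dk_even:
  assumes "1 \<le> k" "k \<le> n" "even m" "1 \<le> m"
  shows "dk n k m = min (n - Sd n k m) ((Od n k m + 1) * aa n k div bb n k - Ed n k m)"
proof -
  obtain l where m: "m = Suc l" using assms(4) by (cases m) auto
  have "m \<noteq> 1" using assms(3) by auto
  then show ?thesis
    using assms unfolding m dk_Suc dstep_def Let_def Od_dstep Ed_dstep sum_list_dseq
    by (auto simp: aa_def bb_def greatest_div mult.commute)
qed

lemma le_div: "0 < (a::nat) \<Longrightarrow> y * a \<le> Y \<Longrightarrow> y \<le> Y div a"
  by (metis div_le_mono nonzero_mult_div_cancel_right not_gr0)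

definition Jinv :: "nat \<Rightarrow> nat \<Rightarrow> nat \<Rightarrow> bool" where
  "Jinv n k l = (if odd l then aa n k * (Od n k l + 1) \<le> bb n k * (Ed n k l + 1) \<and> bb n k * Ed n k l \<le> aa n k * (Od n k l + 1)
     else bb n k * (Ed n k l + 1) \<le> aa n k * (Od n k l + 1) \<and> aa n k * Od n k l \<le> bb n k * (Ed n k l + 1))"

lemma Jinv_step:
  assumes k: "1 \<le> k" "k \<le> n" and l: "1 \<le> l" and J: "Jinv n k l" and S: "Sd n k (Suc l) < n"
  shows "Jinv n k (Suc l)"
proof -
  let ?a = "aa n k" and ?b = "bb n k"
  have a0: "0 < ?a" and b0: "0 < ?b" using k by (auto intro: aa_pos bb_pos)
  show ?thesis
  proof (cases "odd l")
    case True
    define T where "T = (Ed n k l + 1) * ?b div ?a"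
    have "(Od n k l + 1) * ?a \<le> (Ed n k l + 1) * ?b" using J True by (simp add: Jinv_def mult.commute)
    then have T1: "Od n k l + 1 \<le> T" unfolding T_def by (rule le_div[OF a0])
    have d: "dk n k l = min (n - Sd n k l) (T - Od n k l)" using dk_odd[OF k True] T_def by simp
    have "dk n k l < n - Sd n k l" using S by (simp add: Sd_Suc)
    then have d2: "dk n k l = T - Od n k l" using d by linarith
    have O: "Od n k (Suc l) = T" using d2 T1 True by (simp add: Od_Suc)
    have E: "Ed n k (Suc l) = Ed n k l" using True by (simp add: Ed_Suc)
    have g1: "T * ?a \<le> (Ed n k l + 1) * ?b" unfolding T_def by (rule div_times_less_eq_dividend)
    have g2: "(Ed n k l + 1) * ?b < (T + 1) * ?a" unfolding T_def using a0 by (rule div_succ_gt)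
    show ?thesis using True O E g1 g2 by (simp add: Jinv_def mult.commute)
  next
    case False
    define T where "T = (Od n k l + 1) * ?a div ?b"
    have "(Ed n k l + 1) * ?b \<le> (Od n k l + 1) * ?a" using J False by (simp add: Jinv_def mult.commute)
    then have T1: "Ed n k l + 1 \<le> T" unfolding T_def by (rule le_div[OF b0])
    have d: "dk n k l = min (n - Sd n k l) (T - Ed n k l)" using dk_even[OF k _ l] False T_def by simp
    have "dk n k l < n - Sd n k l" using S by (simp add: Sd_Suc)
    then have d2: "dk n k l = T - Ed n k l" using d by linarith
    have E: "Ed n k (Suc l) = T" using d2 T1 False by (simp add: Ed_Suc)
    have O: "Od n k (Suc l) = Od n k l" using False by (simp add: Od_Suc)
    have g1: "T * ?b \<le> (Od n k l + 1) * ?a" unfolding T_def by (rule div_times_less_eq_dividend)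
    have g2: "(Od n k l + 1) * ?a < (T + 1) * ?b" unfolding T_def using b0 by (rule div_succ_gt)
    show ?thesis using False O E g1 g2 by (simp add: Jinv_def mult.commute)
  qed
qed

lemma Sd_mono: "i \<le> j \<Longrightarrow> Sd n k i \<le> Sd n k j"
  unfolding Sd_def by (rule sum_mono2) auto

lemma Jinv_all:
  assumes k: "1 \<le> k" "k \<le> n"
  shows "1 \<le> l \<Longrightarrow> Sd n k l < n \<Longrightarrow> Jinv n k l"
proof (induction l)
  case 0 then show ?case by simp
next
  case (Suc l)
  show ?case
  proof (cases "l = 0")
    case True
    have "Od n k 1 = 0" "Ed n k 1 = 0" by (simp_all add: Od_def Ed_def dk0)
    moreover have "aa n k \<le> bb n k" by (simp add: aa_def bb_def zk_def)
    ultimately show ?thesis using True by (simp add: Jinv_def)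
  next
    case False
    have "Sd n k l < n" using Suc.prems Sd_mono[of l "Suc l" n k] by simp
    then have "Jinv n k l" using Suc.IH False by simp
    then show ?thesis using Jinv_step[OF k] False Suc.prems by simp
  qed
qed


lemma dk_pos:
  assumes k: "1 \<le> k" "k \<le> n" and l: "1 \<le> l" and S: "Sd n k l < n"
  shows "1 \<le> dk n k l"
proof -
  have J: "Jinv n k l" using Jinv_all[OF k l S] .
  have a0: "0 < aa n k" and b0: "0 < bb n k" using k by (auto intro: aa_pos bb_pos)
  show ?thesis
  proof (cases "odd l")
    case True
    have "(Od n k l + 1) * aa n k \<le> (Ed n k l + 1) * bb n k" using J True by (simp add: Jinv_def mult.commute)
    then have "Od n k l + 1 \<le> (Ed n k l + 1) * bb n k div aa n k" by (rule le_div[OF a0])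
    then have "1 \<le> (Ed n k l + 1) * bb n k div aa n k - Od n k l" by linarith
    moreover have "1 \<le> n - Sd n k l" using S by linarith
    ultimately show ?thesis using dk_odd[OF k True] by (simp only: min_def) auto
  next
    case False
    have "(Ed n k l + 1) * bb n k \<le> (Od n k l + 1) * aa n k" using J False by (simp add: Jinv_def mult.commute)
    then have "Ed n k l + 1 \<le> (Od n k l + 1) * aa n k div bb n k" by (rule le_div[OF b0])
    then have "1 \<le> (Od n k l + 1) * aa n k div bb n k - Ed n k l" by linarith
    moreover have "1 \<le> n - Sd n k l" using S by linarith
    ultimately show ?thesis using dk_even[OF k _ l] False by (simp only: min_def) auto
  qed
qed

lemma dk_le:
  assumes k: "1 \<le> k" "k \<le> n"
  shows "dk n k l \<le> n - Sd n k l"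
proof (cases "l = 0")
  case True then show ?thesis by (simp add: dk0)
next
  case False
  then show ?thesis using dk_odd[OF k] dk_even[OF k, of l] by (cases "odd l") auto
qed

lemma Sd_le_n:
  assumes k: "1 \<le> k" "k \<le> n"
  shows "Sd n k l \<le> n"
proof (induction l)
  case 0 then show ?case by (simp add: Sd_def)
next
  case (Suc l) then show ?case using dk_le[OF k, of l] by (simp add: Sd_Suc)
qed

lemma Sd_ge:
  assumes k: "1 \<le> k" "k \<le> n"
  shows "min n l \<le> Sd n k (Suc l)"
proof (induction l)
  case 0 then show ?case by simp
next
  case (Suc l)
  show ?case
  proof (cases "Sd n k (Suc l) < n")
    case True
    then have "1 \<le> dk n k (Suc l)" using dk_pos[OF k, of "Suc l"] by simp
    then show ?thesis using Suc.IH by (simp add: Sd_Suc[of n k "Suc l"])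
  next
    case False
    then show ?thesis by (simp add: Sd_Suc[of n k "Suc l"])
  qed
qed

lemma cap:
  assumes k: "1 \<le> k" "k \<le> n" and l: "1 \<le> l" and S: "Sd n k l < n"
  shows "(odd l \<longrightarrow> aa n k * (Od n k l + dk n k l) \<le> bb n k * (Ed n k l + 1))
       \<and> (even l \<longrightarrow> bb n k * (Ed n k l + dk n k l) \<le> aa n k * (Od n k l + 1))"
proof -
  have J: "Jinv n k l" using Jinv_all[OF k l S] .
  have a0: "0 < aa n k" and b0: "0 < bb n k" using k by (auto intro: aa_pos bb_pos)
  show ?thesis
  proof (cases "odd l")
    case True
    define T where "T = (Ed n k l + 1) * bb n k div aa n k"
    have "(Od n k l + 1) * aa n k \<le> (Ed n k l + 1) * bb n k" using J True by (simp add: Jinv_def mult.commute)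
    then have "Od n k l + 1 \<le> T" unfolding T_def by (rule le_div[OF a0])
    moreover have "dk n k l \<le> T - Od n k l" using dk_odd[OF k True] T_def by simp
    ultimately have "Od n k l + dk n k l \<le> T" by linarith
    then have "aa n k * (Od n k l + dk n k l) \<le> aa n k * T" by simp
    also have "\<dots> \<le> (Ed n k l + 1) * bb n k" unfolding T_def
      using div_times_less_eq_dividend by (simp add: mult.commute)
    finally show ?thesis using True by (simp add: mult.commute)
  next
    case False
    define T where "T = (Od n k l + 1) * aa n k div bb n k"
    have "(Ed n k l + 1) * bb n k \<le> (Od n k l + 1) * aa n k" using J False by (simp add: Jinv_def mult.commute)
    then have "Ed n k l + 1 \<le> T" unfolding T_def by (rule le_div[OF b0])
    moreover have "dk n k l \<le> T - Ed n k l" using dk_even[OF k _ l] False T_def by simp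
    ultimately have "Ed n k l + dk n k l \<le> T" by linarith
    then have "bb n k * (Ed n k l + dk n k l) \<le> bb n k * T" by simp
    also have "\<dots> \<le> (Od n k l + 1) * aa n k" unfolding T_def
      using div_times_less_eq_dividend by (simp add: mult.commute)
    finally show ?thesis using False by (simp add: mult.commute)
  qed
qed

lemma sum_atMost_Sd: "(\<Sum>j\<le>r. dk n k j) = Sd n k (Suc r)"
  by (simp add: Sd_def lessThan_Suc_atMost)

lemma rk_props:
  assumes k: "1 \<le> k" "k \<le> n"
  shows "Sd n k (Suc (rk n k)) = n" "\<And>r. r < rk n k \<Longrightarrow> Sd n k (Suc r) < n" "1 \<le> rk n k"
proof -
  have ex: "\<exists>r. (\<Sum>j\<le>r. dk n k j) = n"
  proof -
    have "Sd n k (Suc n) = n" using Sd_ge[OF k, of n] Sd_le_n[OF k, of "Suc n"] by simp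
    then show ?thesis by (metis sum_atMost_Sd)
  qed
  show S: "Sd n k (Suc (rk n k)) = n"
    using LeastI_ex[OF ex] unfolding rk_def sum_atMost_Sd .
  show lt: "\<And>r. r < rk n k \<Longrightarrow> Sd n k (Suc r) < n"
  proof -
    fix r assume "r < rk n k"
    then have "(\<Sum>j\<le>r. dk n k j) \<noteq> n" unfolding rk_def by (rule not_less_Least)
    then show "Sd n k (Suc r) < n" using Sd_le_n[OF k, of "Suc r"] by (simp add: sum_atMost_Sd)
  qed
  show "1 \<le> rk n k"
  proof (rule ccontr)
    assume "\<not> 1 \<le> rk n k"
    then have "rk n k = 0" by simp
    then have "Sd n k 1 = n" using S by simp
    moreover have "Sd n k 1 = 0" by (simp add: Sd_def dk0)
    ultimately show False using k by simp
  qed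
qed


lemma rr_etak: "rr (etak n k) = rk n k"
  by (simp add: rr_def etak_def dseq_len)

lemma dd_etak: "i \<le> rk n k \<Longrightarrow> dd (etak n k) i = dk n k i"
  by (simp add: dd_def etak_def dseq_nth)

lemma fst_etak: "fst (etak n k) = zk n k"
  by (simp add: etak_def)

lemma tidx_props:
  assumes k: "1 \<le> k" "k \<le> n" and j: "1 \<le> j" "j \<le> n"
  shows "1 \<le> tidx (etak n k) j \<and> tidx (etak n k) j \<le> rk n k
     \<and> Sd n k (tidx (etak n k) j) < j \<and> j \<le> Sd n k (Suc (tidx (etak n k) j))"
proof -
  let ?R = "rk n k" and ?e = "etak n k"
  define P where "P t = (t \<le> rr ?e \<and> (\<Sum>i<t. dd ?e i) < j \<and> j \<le> (\<Sum>i\<le>t. dd ?e i))" for t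
  have Peq: "P t = (t \<le> ?R \<and> Sd n k t < j \<and> j \<le> Sd n k (Suc t))" for t
  proof -
    have "t \<le> ?R \<Longrightarrow> (\<Sum>i<t. dd ?e i) = Sd n k t"
      unfolding Sd_def by (rule sum.cong) (auto simp: dd_etak)
    moreover have "t \<le> ?R \<Longrightarrow> (\<Sum>i\<le>t. dd ?e i) = Sd n k (Suc t)"
      unfolding sum_atMost_Sd[symmetric] by (rule sum.cong) (auto simp: dd_etak)
    ultimately show ?thesis unfolding P_def rr_etak by auto
  qed
  have SR: "Sd n k (Suc ?R) = n" using rk_props[OF k] by simp
  define t0 where "t0 = (LEAST t. j \<le> Sd n k (Suc t))"
  have ex: "j \<le> Sd n k (Suc ?R)" using SR j by simp
  have t0a: "j \<le> Sd n k (Suc t0)" unfolding t0_def by (rule LeastI[of "\<lambda>t. j \<le> Sd n k (Suc t)", OF ex])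
  have t0b: "t0 \<le> ?R" unfolding t0_def by (rule Least_le[of "\<lambda>t. j \<le> Sd n k (Suc t)", OF ex])
  have t0c: "Sd n k t0 < j"
  proof (cases t0)
    case 0 then show ?thesis using j by (simp add: Sd_def)
  next
    case (Suc s)
    then have "s < t0" by simp
    then have "\<not> j \<le> Sd n k (Suc s)" unfolding t0_def by (rule not_less_Least)
    then show ?thesis using Suc by simp
  qed
  have Pt0: "P t0" using Peq t0a t0b t0c by simp
  have uniq: "t = t0" if "P t" for t
  proof (rule ccontr)
    assume ne: "t \<noteq> t0"
    have pt: "Sd n k t < j" "j \<le> Sd n k (Suc t)" using that Peq by auto
    show False
    proof (cases "t < t0")
      case True
      then have "Sd n k (Suc t) \<le> Sd n k t0" by (intro Sd_mono) simp
      then show False using pt t0c by simp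
    next
      case False
      then have "Suc t0 \<le> t" using ne by simp
      then have "Sd n k (Suc t0) \<le> Sd n k t" by (rule Sd_mono)
      then show False using pt t0a by simp
    qed
  qed
  have "tidx ?e j = (THE t. P t)" unfolding tidx_def P_def by simp
  also have "(THE t. P t) = t0" by (rule the_equality[of P, OF Pt0 uniq])
  finally have "tidx ?e j = t0" .
  moreover have "1 \<le> t0"
  proof (rule ccontr)
    assume "\<not> 1 \<le> t0"
    then have "t0 = 0" by simp
    then show False using t0a j by (simp add: Sd_def dk0)
  qed
  ultimately show ?thesis using t0a t0b t0c by simp
qed


lemma arith_bound:
  fixes M a b x y :: nat
  assumes "M = a * x" "M \<le> b * (y + 1)" "b * y \<le> M"
  shows "(a + b) * M \<le> a * b * (x + y + 1) \<and> a * b * (x + y) \<le> (a + b) * M"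
proof -
  have 1: "a * M \<le> a * (b * (y + 1))" using assms(2) by simp
  have 2: "a * (b * y) \<le> a * M" using assms(3) by simp
  have e: "(a + b) * M = a * M + b * (a * x)" using assms(1) by (simp add: algebra_simps)
  have "(a + b) * M \<le> a * (b * (y + 1)) + b * (a * x)" using 1 e by simp
  moreover have "a * (b * (y + 1)) + b * (a * x) = a * b * (x + y + 1)" by (simp add: algebra_simps)
  moreover have "a * (b * y) + b * (a * x) = a * b * (x + y)" by (simp add: algebra_simps)
  ultimately show ?thesis using 2 e by linarith
qed

definition gg :: "nat \<Rightarrow> nat \<Rightarrow> nat \<Rightarrow> int" where
  "gg n k j = fk k (vv (etak n k) j) + int n * int (snd (vv (etak n k) j)) - int j"

lemma position:
  assumes k: "1 \<le> k" "k \<le> n" and j: "1 \<le> j" "j \<le> n"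
  shows "\<exists>M::nat. gg n k j + int j = int M
     \<and> (aa n k + bb n k) * M \<le> aa n k * bb n k * (j + 1)
     \<and> aa n k * bb n k * j \<le> (aa n k + bb n k) * M
     \<and> (rk n k = 1 \<longrightarrow> M = aa n k * j)"
proof -
  let ?e = "etak n k" and ?R = "rk n k" and ?a = "aa n k" and ?b = "bb n k"
  define t where "t = tidx ?e j"
  have tp: "1 \<le> t" "t \<le> ?R" "Sd n k t < j" "j \<le> Sd n k (Suc t)"
    using tidx_props[OF k j] unfolding t_def by auto
  define c where "c = j - Sd n k t"
  have c1: "1 \<le> c" "c \<le> dk n k t" "j = Sd n k t + c"
    using tp unfolding c_def by (auto simp: Sd_Suc)
  have St: "Sd n k t < n" using tp j by simp
  have sO: "(\<Sum>i\<in>{i. i < t \<and> odd i}. dd ?e i) = Od n k t"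
    unfolding Od_def by (rule sum.cong) (use tp in \<open>auto simp: dd_etak\<close>)
  have sE: "(\<Sum>i\<in>{i. i < t \<and> even i}. dd ?e i) = Ed n k t"
    unfolding Ed_def by (rule sum.cong) (use tp in \<open>auto simp: dd_etak\<close>)
  have sS: "(\<Sum>i<t. dd ?e i) = Sd n k t"
    unfolding Sd_def by (rule sum.cong) (use tp in \<open>auto simp: dd_etak\<close>)
  have vvj: "vv ?e j = (if zk n k then (if odd t then (Od n k t + c, 0) else (0, Ed n k t + c))
                 else (if odd t then (0, Od n k t + c) else (Ed n k t + c, 0)))"
    unfolding vv_def Let_def t_def[symmetric] sO sE sS c_def[symmetric] fst_etak by simp
  have J: "Jinv n k t" using Jinv_all[OF k tp(1) St] .
  have C: "(odd t \<longrightarrow> ?a * (Od n k t + dk n k t) \<le> ?b * (Ed n k t + 1))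
       \<and> (even t \<longrightarrow> ?b * (Ed n k t + dk n k t) \<le> ?a * (Od n k t + 1))"
    using cap[OF k tp(1) St] .
  have jsplit: "j = Od n k t + c + Ed n k t" using c1(3) Sd_split[of n k t] by simp
  show ?thesis
  proof (cases "odd t")
    case True
    define M where "M = ?a * (Od n k t + c)"
    have gM: "gg n k j + int j = int M"
      using True k unfolding gg_def vvj M_def fk_def aa_def by (auto simp: algebra_simps of_nat_diff)
    have m1: "M \<le> ?b * (Ed n k t + 1)"
      using C True c1(2) unfolding M_def by (meson add_le_mono1 le_trans mult_le_mono2 nat_add_left_cancel_le)
    have m2: "?b * Ed n k t \<le> M"
      using J True c1(1) unfolding M_def Jinv_def by (meson le_trans mult_le_mono2 nat_add_left_cancel_le)
    have B: "(?a + ?b) * M \<le> ?a * ?b * (Od n k t + c + Ed n k t + 1) \<and> ?a * ?b * (Od n k t + c + Ed n k t) \<le> (?a + ?b) * M"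
      by (rule arith_bound[OF M_def m1 m2])
    have R1: "?R = 1 \<longrightarrow> M = ?a * j"
    proof
      assume "?R = 1"
      then have "t = 1" using tp by simp
      then show "M = ?a * j" using c1(3) unfolding M_def by (simp add: Od_def Sd_def dk0)
    qed
    show ?thesis using gM B R1 jsplit by auto
  next
    case False
    define M where "M = ?b * (Ed n k t + c)"
    have gM: "gg n k j + int j = int M"
      using False k unfolding gg_def vvj M_def fk_def bb_def by (auto simp: algebra_simps of_nat_diff)
    have m1: "M \<le> ?a * (Od n k t + 1)"
      using C False c1(2) unfolding M_def by (meson add_le_mono1 le_trans mult_le_mono2 nat_add_left_cancel_le)
    have m2: "?a * Od n k t \<le> M"
      using J False c1(1) unfolding M_def Jinv_def by (meson le_trans mult_le_mono2 nat_add_left_cancel_le)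
    have B: "(?b + ?a) * M \<le> ?b * ?a * (Ed n k t + c + Od n k t + 1) \<and> ?b * ?a * (Ed n k t + c + Od n k t) \<le> (?b + ?a) * M"
      by (rule arith_bound[OF M_def m1 m2])
    have R1: "?R = 1 \<longrightarrow> M = ?a * j"
    proof
      assume "?R = 1"
      then have "t = 1" using tp by simp
      then show "M = ?a * j" using False by simp
    qed
    show ?thesis using gM B R1 jsplit by (auto simp: algebra_simps)
  qed
qed


lemma rk_one:
  assumes k: "1 \<le> k" "k \<le> n" and a1: "aa n k = 1"
  shows "rk n k = 1"
proof -
  have b: "bb n k = n" using a1 k by (auto simp: aa_def bb_def split: if_splits)
  have "dk n k 1 = min (n - Sd n k 1) ((Ed n k 1 + 1) * bb n k div aa n k - Od n k 1)"
    using dk_odd[OF k, of 1] by simp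
  moreover have "Sd n k 1 = 0" "Ed n k 1 = 0" "Od n k 1 = 0" by (simp_all add: Sd_def Ed_def Od_def dk0)
  ultimately have "dk n k 1 = n" using a1 b by simp
  then have S2: "Sd n k 2 = n" by (simp add: Sd_def numeral_2_eq_2 dk0)
  have "\<not> 1 < rk n k"
  proof
    assume "1 < rk n k"
    then have "Sd n k (Suc 1) < n" by (rule rk_props(2)[OF k])
    then show False using S2 by (simp add: numeral_2_eq_2)
  qed
  then show ?thesis using rk_props(3)[OF k] by simp
qed

lemma key:
  assumes k: "1 \<le> k" "k \<le> n" and j: "1 \<le> j" "j \<le> l" and l: "l \<le> n"
  shows "gg n k j \<le> gg n k l + 1 \<and> gg n k l \<ge> -1"
proof -
  let ?a = "aa n k" and ?b = "bb n k"
  obtain Mj where Mj: "gg n k j + int j = int Mj" "(?a + ?b) * Mj \<le> ?a * ?b * (j + 1)"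
      "?a * ?b * j \<le> (?a + ?b) * Mj" "rk n k = 1 \<longrightarrow> Mj = ?a * j"
    using position[OF k j(1)] j l by (meson le_trans)
  obtain Ml where Ml: "gg n k l + int l = int Ml" "(?a + ?b) * Ml \<le> ?a * ?b * (l + 1)"
      "?a * ?b * l \<le> (?a + ?b) * Ml" "rk n k = 1 \<longrightarrow> Ml = ?a * l"
    using position[OF k, of l] j l by auto
  have a0: "0 < ?a" using aa_pos[OF k] .
  show ?thesis
  proof (cases "?a = 1")
    case True
    then have "rk n k = 1" by (rule rk_one[OF k])
    then show ?thesis using Mj Ml True by simp
  next
    case False
    then have a2: "2 \<le> ?a" using a0 by simp
    have b2: "2 \<le> ?b" using k a2 by (auto simp: aa_def bb_def zk_def split: if_splits)
    have PA: "?a + ?b \<le> ?a * ?b"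
    proof -
      have "?a * 2 \<le> ?a * ?b" using b2 by simp
      moreover have "2 * ?b \<le> ?a * ?b" using a2 by simp
      ultimately show ?thesis by linarith
    qed
    define A where "A = int (?a + ?b)"
    define P where "P = int (?a * ?b)"
    have A0: "0 < A" unfolding A_def using a0 by simp
    have PA': "A \<le> P" unfolding A_def P_def using PA by linarith
    have hj: "A * int Mj \<le> P * (int j + 1)" unfolding A_def P_def
      using Mj(2) by (metis of_nat_Suc of_nat_le_iff of_nat_mult Suc_eq_plus1 of_nat_1 of_nat_add)
    have hl: "P * int l \<le> A * int Ml" unfolding A_def P_def
      using Ml(3) by (metis of_nat_le_iff of_nat_mult)
    have l0: "A * int l \<le> A * int Ml"
    proof -
      have "A * int l \<le> P * int l" using PA' by (simp add: mult_right_mono)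
      then show ?thesis using hl by linarith
    qed
    then have "int l \<le> int Ml" using A0 by simp
    then have g1: "gg n k l \<ge> -1" using Ml(1) by linarith
    have g2: "gg n k j \<le> gg n k l + 1"
    proof (cases "j = l")
      case True then show ?thesis by simp
    next
      case False
      define d where "d = int l - int j - 1"
      have d0: "0 \<le> d" unfolding d_def using False j by simp
      have "A * (int Ml - int Mj) \<ge> P * d" unfolding d_def using hj hl by (simp add: algebra_simps)
      moreover have "P * d \<ge> A * d" using PA' d0 by (simp add: mult_right_mono)
      ultimately have "A * (int Ml - int Mj) \<ge> A * d" by linarith
      then have "int Ml - int Mj \<ge> d" using A0 by simp
      then show ?thesis using Mj(1) Ml(1) unfolding d_def by linarith
    qed
    show ?thesis using g1 g2 by simp
  qed
qed


lemma fk_shift: "fk k (x + s, y + s) = fk k (x, y) + int s"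
  by (simp add: fk_def algebra_simps)

theorem lemma3p12:
  fixes n k l q :: nat and v :: "nat \<times> nat"
  assumes "n \<ge> 1" and "1 \<le> k" and "k \<le> n" and "1 \<le> l" and "l \<le> n"
    and "q \<ge> n - l + 1 + rv n (etak n k) l"
    and "v = (fst (vv (etak n k) l) + q, snd (vv (etak n k) l) + q)"
  shows "\<forall>u \<in> T0 n \<union> (\<Union>j\<in>{1..l}. shift (TT n (etak n k) j) (rv n (etak n k) j)).
           fk k v \<ge> fk k u"
proof
  fix u assume u: "u \<in> T0 n \<union> (\<Union>j\<in>{1..l}. shift (TT n (etak n k) j) (rv n (etak n k) j))"
  have k: "1 \<le> k" "k \<le> n" using assms by auto
  let ?V = "vv (etak n k) l"
  have fv: "fk k v = fk k ?V + int q" using assms(7) fk_shift[of k "fst ?V" q "snd ?V"] by simp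
  have "int q \<ge> int n - int l + 1 + int n * int (snd ?V)"
  proof -
    have "int (n - l + 1 + n * snd ?V) \<le> int q" using assms(6) unfolding rv_def by (simp only: of_nat_le_iff)
    moreover have "int (n - l) = int n - int l" using assms(5) by (rule of_nat_diff)
    ultimately show ?thesis by simp
  qed
  then have fv2: "fk k v \<ge> gg n k l + int n + 1" using fv unfolding gg_def by linarith
  have kl: "gg n k l \<ge> -1" using key[OF k assms(4) order_refl assms(5)] by simp
  show "fk k v \<ge> fk k u"
  proof (cases "u \<in> T0 n")
    case True
    then obtain p where p: "u = (p, p)" "p \<le> n" unfolding T0_def by auto
    have "fk k u = int p" unfolding p fk_def by (simp add: algebra_simps)
    then show ?thesis using fv2 kl p(2) by linarith
  next
    case False
    then obtain j where j: "j \<in> {1..l}" "u \<in> shift (TT n (etak n k) j) (rv n (etak n k) j)" using u by auto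
    let ?W = "vv (etak n k) j"
    obtain p where p: "p \<le> n - j"
      "u = (fst ?W + p + rv n (etak n k) j, snd ?W + p + rv n (etak n k) j)"
      using j(2) unfolding shift_def TT_def by auto
    have "fk k u = fk k ?W + int (p + rv n (etak n k) j)"
      unfolding p(2) using fk_shift[of k "fst ?W" "p + rv n (etak n k) j" "snd ?W"]
      by (simp add: add.assoc)
    also have "\<dots> = gg n k j + int j + int p" unfolding gg_def rv_def by simp
    finally have fu: "fk k u = gg n k j + int j + int p" .
    have jl: "1 \<le> j" "j \<le> l" using j(1) by auto
    have "gg n k j \<le> gg n k l + 1" using key[OF k jl assms(5)] by simp
    moreover have "int j + int p \<le> int n" using p(1) jl assms(5) by linarith
    ultimately show ?thesis using fu fv2 by linarith
  qed
qed

end
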